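(* Let $X\times G\to X$ be a Bourbaki-proper continuous right action of a locally compact Hausdorff group on a Hausdorff space, with quotient map $\pi\colon X\to X/G$, and let $F\subseteq X$ be a closed subset such that the action is $F$-proper. If $F$ is paracompact, then so is $\pi(F)$.
   Context: For $A,B\subseteq X$ set $\langle A:B\rangle:=\{g\in G: Bg\cap A\neq\emptyset\}$ and write $A\perp B$ if it is relatively compact in $G$. The action is Bourbaki-proper if for all $x,x'\in X$ there are neighborhoods $V_x\ni x$, $V_{x'}\ni x'$ with $V_{x'}\perp V_x$. For closed $F$, it is $F$-proper if for every $x\in X$ there are neighborhoods $V_x\ni x$ and $V_F\supseteq F$ with $V_F\perp V_x$. *)

theory Defs
  imports "HOL-Analysis.Analysis"
begin

text \<open>Paracompactness of an (abstract) topological space: every open cover has a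
  locally finite open refinement (no separation axiom built in).\<close>
definition paracompact_space :: "'a topology \<Rightarrow> bool" where
  "paracompact_space T \<longleftrightarrow>
     (\<forall>\<U>. (\<forall>U\<in>\<U>. openin T U) \<and> topspace T \<subseteq> \<Union>\<U> \<longrightarrow>
        (\<exists>\<V>. (\<forall>V\<in>\<V>. openin T V) \<and> topspace T \<subseteq> \<Union>\<V> \<and>
              (\<forall>V\<in>\<V>. \<exists>U\<in>\<U>. V \<subseteq> U) \<and> locally_finite_in T \<V>))"

text \<open>Continuous right action of a topological group (written additively,
  not necessarily commutative) on a space: x.0 = x, (x.g).h = x.(g+h).\<close>
definition cont_right_action :: "('x::topological_space \<Rightarrow> 'g::topological_group_add \<Rightarrow> 'x) \<Rightarrow> bool" where
  "cont_right_action act \<longleftrightarrow>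
     (\<forall>x. act x 0 = x) \<and> (\<forall>x g h. act (act x g) h = act x (g + h)) \<and>
     continuous_on UNIV (\<lambda>(x, g). act x g)"

definition transporter :: "('x \<Rightarrow> 'g \<Rightarrow> 'x) \<Rightarrow> 'x set \<Rightarrow> 'x set \<Rightarrow> 'g set" where
  "transporter act A B = {g. (\<lambda>x. act x g) ` B \<inter> A \<noteq> {}}"

definition perp :: "('x \<Rightarrow> 'g::topological_space \<Rightarrow> 'x) \<Rightarrow> 'x set \<Rightarrow> 'x set \<Rightarrow> bool" where
  "perp act A B \<longleftrightarrow> compact (closure (transporter act A B))"

definition bourbaki_proper :: "('x::topological_space \<Rightarrow> 'g::topological_space \<Rightarrow> 'x) \<Rightarrow> bool" where
  "bourbaki_proper act \<longleftrightarrow>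
     (\<forall>x x'. \<exists>Vx Vx'. open Vx \<and> x \<in> Vx \<and> open Vx' \<and> x' \<in> Vx' \<and> perp act Vx' Vx)"

definition F_proper :: "('x::topological_space \<Rightarrow> 'g::topological_space \<Rightarrow> 'x) \<Rightarrow> 'x set \<Rightarrow> bool" where
  "F_proper act F \<longleftrightarrow>
     (\<forall>x. \<exists>Vx VF. open Vx \<and> x \<in> Vx \<and> open VF \<and> F \<subseteq> VF \<and> perp act VF Vx)"

text \<open>Orbit space X/G: points are orbits, \<pi> x = xG, quotient topology.\<close>
definition orbit_map :: "('x \<Rightarrow> 'g \<Rightarrow> 'x) \<Rightarrow> 'x \<Rightarrow> 'x set" where
  "orbit_map act x = range (act x)"

definition orbit_space :: "('x::topological_space \<Rightarrow> 'g \<Rightarrow> 'x) \<Rightarrow> 'x set topology" where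
  "orbit_space act = topology (\<lambda>U. U \<subseteq> range (orbit_map act) \<and> open (orbit_map act -` U))"

end

theory Submission
  imports Defs
begin


lemma paracompactD:
  assumes "paracompact_space X" "\<forall>U\<in>\<U>. openin X U" "topspace X \<subseteq> \<Union>\<U>"
  shows "\<exists>\<V>. (\<forall>V\<in>\<V>. openin X V) \<and> topspace X \<subseteq> \<Union>\<V> \<and>
              (\<forall>V\<in>\<V>. \<exists>U\<in>\<U>. V \<subseteq> U) \<and> locally_finite_in X \<V>"
  using assms unfolding paracompact_space_def by blast

lemma paracompactE:
  assumes "paracompact_space X" "\<forall>U\<in>\<U>. openin X U" "topspace X \<subseteq> \<Union>\<U>"
  obtains \<V> where "\<forall>V\<in>\<V>. openin X V" "topspace X \<subseteq> \<Union>\<V>"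
              "\<forall>V\<in>\<V>. \<exists>U\<in>\<U>. V \<subseteq> U" "locally_finite_in X \<V>"
  using paracompactD[OF assms] by blast

lemma paracompact_Hausdorff_imp_regular:
  assumes P: "paracompact_space X" and H: "Hausdorff_space X"
  shows "regular_space X"
  unfolding regular_space
proof (intro allI impI)
  fix C a assume Ca: "closedin X C \<and> a \<in> topspace X - C"
  define \<U> where "\<U> = insert (topspace X - C) {P. openin X P \<and> a \<notin> X closure_of P}"
  have opU: "\<forall>U\<in>\<U>. openin X U" using Ca by (auto simp: \<U>_def)
  have covU: "topspace X \<subseteq> \<Union>\<U>"
  proof
    fix x assume x: "x \<in> topspace X"
    show "x \<in> \<Union>\<U>"
    proof (cases "x \<in> C")
      case False then show ?thesis using x by (auto simp: \<U>_def)
    next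
      case True
      then have "x \<noteq> a" using Ca by auto
      then obtain P Q where "openin X P" "openin X Q" "x \<in> P" "a \<in> Q" "disjnt P Q"
        using H x Ca unfolding Hausdorff_space_def by (metis Diff_iff)
      then have "a \<notin> X closure_of P"
        by (metis disjnt_iff in_closure_of)
      then show ?thesis using \<open>openin X P\<close> \<open>x \<in> P\<close> by (auto simp: \<U>_def)
    qed
  qed
  obtain \<V> where opV: "\<forall>V\<in>\<V>. openin X V" and covV: "topspace X \<subseteq> \<Union>\<V>"
    and refV: "\<forall>V\<in>\<V>. \<exists>U\<in>\<U>. V \<subseteq> U" and lfV: "locally_finite_in X \<V>"
    by (rule paracompactE[OF P opU covU])
  define \<V>' where "\<V>' = {V \<in> \<V>. V \<inter> C \<noteq> {}}"
  define W where "W = \<Union>\<V>'"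
  have lf': "locally_finite_in X \<V>'" unfolding \<V>'_def by (rule locally_finite_in_subset[OF lfV]) auto
  have CW: "C \<subseteq> W"
    using covV Ca closedin_subset unfolding W_def \<V>'_def by fastforce
  have opW: "openin X W" using opV unfolding W_def \<V>'_def by auto
  have aW: "a \<notin> X closure_of W"
  proof
    assume "a \<in> X closure_of W"
    then obtain V where V: "V \<in> \<V>'" "a \<in> X closure_of V"
      using closure_of_locally_finite_Union[OF lf'] unfolding W_def by auto
    then obtain U where U: "U \<in> \<U>" "V \<subseteq> U" using refV \<V>'_def by auto
    have "U \<noteq> topspace X - C" using U V \<V>'_def by auto
    then have "a \<notin> X closure_of U" using U by (auto simp: \<U>_def)
    moreover have "a \<in> X closure_of U" using V U closure_of_mono by blast
    ultimately show False by blast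
  qed
  define Om where "Om = topspace X - X closure_of W"
  have "openin X Om" unfolding Om_def by (simp add: openin_diff)
  moreover have "a \<in> Om" using Ca aW Om_def by auto
  moreover have "X closure_of Om \<subseteq> topspace X - W"
  proof (rule closure_of_minimal)
    show "Om \<subseteq> topspace X - W"
      using closure_of_subset[OF openin_subset[OF opW]] unfolding Om_def by blast
    show "closedin X (topspace X - W)" by (intro closedin_diff closedin_topspace opW)
  qed
  ultimately show "\<exists>U. openin X U \<and> a \<in> U \<and> disjnt C (X closure_of U)"
    unfolding disjnt_def using CW by blast
qed


lemma regular_nbhd:
  assumes R: "regular_space X" and S: "openin X S" and x: "x \<in> S"
  shows "\<exists>W. openin X W \<and> x \<in> W \<and> X closure_of W \<subseteq> S"
proof -
  have "closedin X (topspace X - S)" using S by (simp add: closedin_diff)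
  moreover have "x \<in> topspace X - (topspace X - S)" using S x openin_subset by blast
  ultimately obtain W where W: "openin X W" "x \<in> W" "disjnt (topspace X - S) (X closure_of W)"
    using R unfolding regular_space by blast
  have "X closure_of W \<subseteq> topspace X" by (rule closure_of_subset_topspace)
  then have "X closure_of W \<subseteq> S" using W(3) unfolding disjnt_def by blast
  then show ?thesis using W by blast
qed

lemma compact_lf_nbhd:
  assumes K: "compactin X K" and lf: "locally_finite_in X \<A>"
  shows "\<exists>O'. openin X O' \<and> K \<subseteq> O' \<and> finite {A\<in>\<A>. A \<inter> O' \<noteq> {}}"
proof -
  define \<N> where "\<N> = {N. openin X N \<and> finite {A\<in>\<A>. A \<inter> N \<noteq> {}}}"
  have "K \<subseteq> topspace X" using K by (rule compactin_subset_topspace)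
  then have "K \<subseteq> \<Union>\<N>" using lf unfolding locally_finite_in_def \<N>_def by blast
  moreover have "\<forall>N\<in>\<N>. openin X N" unfolding \<N>_def by blast
  ultimately obtain \<S> where S: "finite \<S>" "\<S> \<subseteq> \<N>" "K \<subseteq> \<Union>\<S>"
    using K unfolding compactin_def by meson
  have "openin X (\<Union>\<S>)" using S(2) unfolding \<N>_def by auto
  moreover have "{A\<in>\<A>. A \<inter> \<Union>\<S> \<noteq> {}} = (\<Union>N\<in>\<S>. {A\<in>\<A>. A \<inter> N \<noteq> {}})" by blast
  moreover have "finite (\<Union>N\<in>\<S>. {A\<in>\<A>. A \<inter> N \<noteq> {}})"
    using S(1,2) unfolding \<N>_def by auto
  ultimately show ?thesis using S(3) by auto
qed

lemma closed_refinement_imp_paracompact: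
  assumes R: "\<And>\<U>. \<forall>U\<in>\<U>. openin Y U \<Longrightarrow> topspace Y \<subseteq> \<Union>\<U> \<Longrightarrow>
     \<exists>\<F>. (\<forall>S\<in>\<F>. closedin Y S) \<and> topspace Y \<subseteq> \<Union>\<F> \<and> (\<forall>S\<in>\<F>. \<exists>U\<in>\<U>. S \<subseteq> U) \<and> locally_finite_in Y \<F>"
  shows "paracompact_space Y"
  unfolding paracompact_space_def
proof (intro allI impI)
  fix \<U> assume H: "(\<forall>U\<in>\<U>. openin Y U) \<and> topspace Y \<subseteq> \<Union>\<U>"
  then have opU: "\<forall>U\<in>\<U>. openin Y U" and covU: "topspace Y \<subseteq> \<Union>\<U>" by auto
  obtain \<F> where clF: "\<forall>S\<in>\<F>. closedin Y S" and covF: "topspace Y \<subseteq> \<Union>\<F>"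
    and refF: "\<forall>S\<in>\<F>. \<exists>U\<in>\<U>. S \<subseteq> U" and lfF: "locally_finite_in Y \<F>"
    using R[OF opU covU] by blast
  define \<O> where "\<O> = {O'. openin Y O' \<and> finite {S\<in>\<F>. S \<inter> O' \<noteq> {}}}"
  have opO: "\<forall>O'\<in>\<O>. openin Y O'" unfolding \<O>_def by blast
  have covO: "topspace Y \<subseteq> \<Union>\<O>" using lfF unfolding locally_finite_in_def \<O>_def by blast
  obtain \<A> where clA: "\<forall>S\<in>\<A>. closedin Y S" and covA: "topspace Y \<subseteq> \<Union>\<A>"
    and refA: "\<forall>S\<in>\<A>. \<exists>U\<in>\<O>. S \<subseteq> U" and lfA: "locally_finite_in Y \<A>"
    using R[OF opO covO] by blast
  obtain u where u: "\<forall>S\<in>\<F>. u S \<in> \<U> \<and> S \<subseteq> u S" using refF by metis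
  define E where "E S = topspace Y - \<Union>{A\<in>\<A>. A \<inter> S = {}}" for S
  define G where "G S = E S \<inter> u S" for S
  have opG: "openin Y (G S)" if "S \<in> \<F>" for S
  proof -
    have "locally_finite_in Y {A\<in>\<A>. A \<inter> S = {}}"
      by (rule locally_finite_in_subset[OF lfA]) auto
    then have "closedin Y (\<Union>{A\<in>\<A>. A \<inter> S = {}})"
      by (rule closedin_locally_finite_Union[rotated]) (use clA in auto)
    then have "openin Y (E S)" unfolding E_def by (simp add: openin_diff)
    moreover have "openin Y (u S)" using u opU that by blast
    ultimately show ?thesis unfolding G_def by (rule openin_Int)
  qed
  have SG: "S \<subseteq> G S" if "S \<in> \<F>" for S
  proof -
    have "S \<subseteq> topspace Y" using clF that closedin_subset by blast
    then have "S \<subseteq> E S" unfolding E_def by blast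
    then show ?thesis using u that unfolding G_def by blast
  qed
  show "\<exists>\<V>. (\<forall>V\<in>\<V>. openin Y V) \<and> topspace Y \<subseteq> \<Union>\<V> \<and>
              (\<forall>V\<in>\<V>. \<exists>U\<in>\<U>. V \<subseteq> U) \<and> locally_finite_in Y \<V>"
  proof (intro exI conjI)
    show "\<forall>V\<in>G ` \<F>. openin Y V" using opG by blast
    show "topspace Y \<subseteq> \<Union> (G ` \<F>)" using covF SG by blast
    show "\<forall>V\<in>G ` \<F>. \<exists>U\<in>\<U>. V \<subseteq> U" using u unfolding G_def by blast
    show "locally_finite_in Y (G ` \<F>)"
      unfolding locally_finite_in_def
    proof (intro conjI ballI)
      show "\<Union> (G ` \<F>) \<subseteq> topspace Y" unfolding G_def E_def by blast
      fix y assume y: "y \<in> topspace Y"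
      then obtain N where N: "openin Y N" "y \<in> N" and finN: "finite {A\<in>\<A>. A \<inter> N \<noteq> {}}"
        using lfA unfolding locally_finite_in_def by blast
      define T where "T = (\<Union>A\<in>{A\<in>\<A>. A \<inter> N \<noteq> {}}. {S\<in>\<F>. S \<inter> A \<noteq> {}})"
      have "finite {S\<in>\<F>. S \<inter> A \<noteq> {}}" if A: "A \<in> \<A>" for A
      proof -
        obtain O' where "O' \<in> \<O>" "A \<subseteq> O'" using refA A by blast
        then have "finite {S\<in>\<F>. S \<inter> O' \<noteq> {}}" unfolding \<O>_def by blast
        moreover have "{S\<in>\<F>. S \<inter> A \<noteq> {}} \<subseteq> {S\<in>\<F>. S \<inter> O' \<noteq> {}}" using \<open>A \<subseteq> O'\<close> by blast
        ultimately show ?thesis by (rule finite_subset[rotated])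
      qed
      then have finT: "finite T" unfolding T_def using finN by auto
      have "{V \<in> G ` \<F>. V \<inter> N \<noteq> {}} \<subseteq> G ` T"
      proof
        fix V assume "V \<in> {V \<in> G ` \<F>. V \<inter> N \<noteq> {}}"
        then obtain S z where S: "S \<in> \<F>" "V = G S" "z \<in> G S" "z \<in> N" by blast
        then have zt: "z \<in> topspace Y" unfolding G_def E_def by blast
        then obtain A where A: "A \<in> \<A>" "z \<in> A" using covA by blast
        have "A \<inter> S \<noteq> {}" using S(3) A unfolding G_def E_def by blast
        then have "S \<in> T" unfolding T_def using A S by blast
        then show "V \<in> G ` T" using S by blast
      qed
      then have "finite {V \<in> G ` \<F>. V \<inter> N \<noteq> {}}" using finT by (meson finite_imageI finite_subset)
      then show "\<exists>V. openin Y V \<and> y \<in> V \<and> finite {U \<in> G ` \<F>. U \<inter> V \<noteq> {}}" using N by blast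
    qed
  qed
qed

lemma perfect_image_closed_refinement:
  assumes P: "paracompact_space X" and Rg: "regular_space X" and cf: "continuous_map X Y f"
    and im: "f ` topspace X = topspace Y" and pm: "proper_map X Y f"
    and op: "\<forall>U\<in>\<U>. openin Y U" and cov: "topspace Y \<subseteq> \<Union>\<U>"
  shows "\<exists>\<F>. (\<forall>S\<in>\<F>. closedin Y S) \<and> topspace Y \<subseteq> \<Union>\<F> \<and> (\<forall>S\<in>\<F>. \<exists>U\<in>\<U>. S \<subseteq> U) \<and> locally_finite_in Y \<F>"
proof -
  define \<W> where "\<W> = {W. openin X W \<and> (\<exists>U\<in>\<U>. X closure_of W \<subseteq> {x\<in>topspace X. f x \<in> U})}"
  have opW: "\<forall>W\<in>\<W>. openin X W" by (simp add: \<W>_def)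
  have covW: "topspace X \<subseteq> \<Union>\<W>"
  proof
    fix x assume x: "x \<in> topspace X"
    then have "f x \<in> topspace Y" using im by blast
    then obtain U where U: "U\<in>\<U>" "f x \<in> U" using cov by blast
    have oU: "openin X {x\<in>topspace X. f x \<in> U}"
      using cf op U openin_continuous_map_preimage by blast
    obtain W where "openin X W" "x \<in> W" "X closure_of W \<subseteq> {x\<in>topspace X. f x \<in> U}"
      using regular_nbhd[OF Rg oU] x U by blast
    then show "x \<in> \<Union>\<W>" using U unfolding \<W>_def by blast
  qed
  obtain \<V> where opV: "\<forall>V\<in>\<V>. openin X V" and covV: "topspace X \<subseteq> \<Union>\<V>"
    and refV: "\<forall>V\<in>\<V>. \<exists>U\<in>\<W>. V \<subseteq> U" and lfV: "locally_finite_in X \<V>"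
    by (rule paracompactE[OF P opW covW])
  have cm: "closed_map X Y f" using pm by (rule proper_imp_closed_map)
  define \<F> where "\<F> = (\<lambda>V. f ` (X closure_of V)) ` \<V>"
  have lfC: "locally_finite_in X ((\<lambda>S. X closure_of S) ` \<V>)"
    using lfV by (rule locally_finite_in_closure)
  show ?thesis
  proof (intro exI conjI)
    show "\<forall>S\<in>\<F>. closedin Y S"
      using cm unfolding \<F>_def closed_map_def by auto
    show "topspace Y \<subseteq> \<Union>\<F>"
    proof
      fix y assume "y \<in> topspace Y"
      then obtain x where x: "x \<in> topspace X" "y = f x" using im by blast
      then obtain V where V: "V \<in> \<V>" "x \<in> V" using covV by blast
      have "V \<subseteq> topspace X" using opV V(1) openin_subset by blast
      then have "V \<subseteq> X closure_of V" by (rule closure_of_subset)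
      then have "x \<in> X closure_of V" using V(2) by blast
      then show "y \<in> \<Union>\<F>" using V x unfolding \<F>_def by blast
    qed
    show "\<forall>S\<in>\<F>. \<exists>U\<in>\<U>. S \<subseteq> U"
    proof
      fix S assume "S \<in> \<F>"
      then obtain V where V: "V \<in> \<V>" "S = f ` (X closure_of V)" unfolding \<F>_def by blast
      then obtain W where W: "W \<in> \<W>" "V \<subseteq> W" using refV by blast
      then obtain U where U: "U \<in> \<U>" "X closure_of W \<subseteq> {x\<in>topspace X. f x \<in> U}"
        unfolding \<W>_def by blast
      have "X closure_of V \<subseteq> X closure_of W" using W(2) by (rule closure_of_mono)
      then have "S \<subseteq> U" using U V by blast
      then show "\<exists>U\<in>\<U>. S \<subseteq> U" using U by blast
    qed
    show "locally_finite_in Y \<F>"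
      unfolding locally_finite_in_def
    proof (intro conjI ballI)
      show "\<Union>\<F> \<subseteq> topspace Y"
        using closure_of_subset_topspace im unfolding \<F>_def by fastforce
      fix y assume y: "y \<in> topspace Y"
      then have K: "compactin X {x \<in> topspace X. f x = y}" using pm unfolding proper_map_def by blast
      obtain O' where O': "openin X O'" "{x \<in> topspace X. f x = y} \<subseteq> O'"
        and finO: "finite {A\<in>(\<lambda>S. X closure_of S) ` \<V>. A \<inter> O' \<noteq> {}}"
        using compact_lf_nbhd[OF K lfC] by blast
      obtain N where N: "openin Y N" "y \<in> N" "{x \<in> topspace X. f x \<in> N} \<subseteq> O'"
        using cm O' y unfolding closed_map_fibre_neighbourhood by blast
      have "{S\<in>\<F>. S \<inter> N \<noteq> {}} \<subseteq> (\<lambda>C. f ` C) ` {A\<in>(\<lambda>S. X closure_of S) ` \<V>. A \<inter> O' \<noteq> {}}"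
      proof
        fix S assume "S \<in> {S\<in>\<F>. S \<inter> N \<noteq> {}}"
        then obtain V z where V: "V \<in> \<V>" "S = f ` (X closure_of V)" "z \<in> X closure_of V" "f z \<in> N"
          unfolding \<F>_def by blast
        have "z \<in> topspace X" using V(3) by (simp add: in_closure_of)
        then have "z \<in> O'" using N V by blast
        then show "S \<in> (\<lambda>C. f ` C) ` {A\<in>(\<lambda>S. X closure_of S) ` \<V>. A \<inter> O' \<noteq> {}}"
          using V by blast
      qed
      then have "finite {S\<in>\<F>. S \<inter> N \<noteq> {}}" using finO by (meson finite_imageI finite_subset)
      then show "\<exists>V. openin Y V \<and> y \<in> V \<and> finite {U \<in> \<F>. U \<inter> V \<noteq> {}}" using N by blast
    qed
  qed
qed

lemma perfect_image_paracompact: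
  assumes P: "paracompact_space X" and H: "Hausdorff_space X" and cf: "continuous_map X Y f"
    and im: "f ` topspace X = topspace Y" and pm: "proper_map X Y f"
  shows "paracompact_space Y"
  using perfect_image_closed_refinement[OF P paracompact_Hausdorff_imp_regular[OF P H] cf im pm]
  by (rule closed_refinement_imp_paracompact)



lemma orbit_space_open:
  "openin (orbit_space act) U \<longleftrightarrow> U \<subseteq> range (orbit_map act) \<and> open (orbit_map act -` U)"
proof -
  have "istopology (\<lambda>U. U \<subseteq> range (orbit_map act) \<and> open (orbit_map act -` U))"
    unfolding istopology_def by (auto simp: vimage_Union intro!: open_UN)
  then show ?thesis unfolding orbit_space_def by simp
qed

lemma topspace_orbit_space: "topspace (orbit_space act) = range (orbit_map act)"
proof
  show "topspace (orbit_space act) \<subseteq> range (orbit_map act)"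
    unfolding topspace_def orbit_space_open by blast
  have "openin (orbit_space act) (range (orbit_map act))"
    unfolding orbit_space_open by (auto simp: vimage_def)
  then show "range (orbit_map act) \<subseteq> topspace (orbit_space act)"
    by (rule openin_subset)
qed

lemma orbit_eq:
  fixes act :: "'x::topological_space \<Rightarrow> 'g::topological_group_add \<Rightarrow> 'x"
  assumes A: "cont_right_action act"
  shows "orbit_map act x = orbit_map act y \<longleftrightarrow> (\<exists>g. y = act x g)"
proof
  have a0: "\<And>x. act x 0 = x" and aa: "\<And>x g h. act (act x g) h = act x (g + h)"
    using A unfolding cont_right_action_def by auto
  {
    assume "orbit_map act x = orbit_map act y"
    moreover have "y \<in> orbit_map act y" unfolding orbit_map_def using a0 by (metis rangeI)
    ultimately show "\<exists>g. y = act x g" unfolding orbit_map_def by auto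
  }
  {
    assume "\<exists>g. y = act x g"
    then obtain g where g: "y = act x g" by blast
    show "orbit_map act x = orbit_map act y"
      unfolding orbit_map_def
    proof
      show "range (act x) \<subseteq> range (act y)"
      proof
        fix z assume "z \<in> range (act x)"
        then obtain h where "z = act x h" by blast
        moreover have "act y (- g + h) = act x h" using g aa by (simp add: add.assoc[symmetric])
        ultimately show "z \<in> range (act y)" by (metis rangeI)
      qed
      show "range (act y) \<subseteq> range (act x)" using g aa by auto
    qed
  }
qed

lemma FPD:
  assumes "F_proper act F"
  shows "\<exists>Vx VF. open Vx \<and> x \<in> Vx \<and> open VF \<and> F \<subseteq> VF \<and> compact (closure (transporter act VF Vx))"
  using assms unfolding F_proper_def perp_def by simp

lemma saturation_closed:
  fixes act :: "'x::topological_space \<Rightarrow> 'g::topological_group_add \<Rightarrow> 'x"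
  assumes A: "cont_right_action act" and CF: "C \<subseteq> F" and cC: "closed C" and FP: "F_proper act F"
  shows "closed {y. \<exists>c\<in>C. \<exists>g. y = act c g}"
proof -
  have a0: "\<And>x. act x 0 = x" and aa: "\<And>x g h. act (act x g) h = act x (g + h)"
    and ct: "continuous_on UNIV (\<lambda>(x, g). act x g)"
    using A unfolding cont_right_action_def by auto
  define S where "S = {y. \<exists>c\<in>C. \<exists>g. y = act c g}"
  define P where "P = (\<lambda>(x, g). act x g) -` (- C)"
  have opP: "open P"
  proof -
    have "open (- C)" using cC by (simp add: open_Compl)
    then show ?thesis unfolding P_def by (rule open_vimage[OF _ ct])
  qed
  have "open (- S)"
  proof (subst open_subopen, intro ballI)
    fix x assume x: "x \<in> - S"
    obtain Vx VF where V: "open Vx" "x \<in> Vx" "open VF" "F \<subseteq> VF"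
      and K: "compact (closure (transporter act VF Vx))"
      using FPD[OF FP, of x] by blast
    define K where "K = closure (transporter act VF Vx)"
    have "\<forall>g\<in>K. \<exists>A B. open A \<and> open B \<and> (x, g) \<in> A \<times> B \<and> A \<times> B \<subseteq> P"
    proof
      fix g assume "g \<in> K"
      have "act x g \<notin> C"
      proof
        assume "act x g \<in> C"
        moreover have "act (act x g) (- g) = x" using aa a0 by simp
        ultimately have "x \<in> S" unfolding S_def by (metis (mono_tags, lifting) mem_Collect_eq)
        then show False using x by blast
      qed
      then have xgP: "(x, g) \<in> P" unfolding P_def by simp
      obtain A B where "open A" "open B" "(x, g) \<in> A \<times> B" "A \<times> B \<subseteq> P"
        by (rule open_prod_elim[OF opP xgP])
      then show "\<exists>A B. open A \<and> open B \<and> (x, g) \<in> A \<times> B \<and> A \<times> B \<subseteq> P"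
        by blast
    qed
    then have "\<exists>A. \<forall>g\<in>K. \<exists>B. open (A g) \<and> open B \<and> (x, g) \<in> A g \<times> B \<and> A g \<times> B \<subseteq> P"
      by (rule bchoice)
    then obtain A where "\<forall>g\<in>K. \<exists>B. open (A g) \<and> open B \<and> (x, g) \<in> A g \<times> B \<and> A g \<times> B \<subseteq> P"
      by (elim exE)
    then have "\<exists>B. \<forall>g\<in>K. open (A g) \<and> open (B g) \<and> (x, g) \<in> A g \<times> B g \<and> A g \<times> B g \<subseteq> P"
      by (rule bchoice)
    then obtain B where AB: "\<forall>g\<in>K. open (A g) \<and> open (B g) \<and> (x, g) \<in> A g \<times> B g \<and> A g \<times> B g \<subseteq> P"
      by (elim exE)
    have "compact K" using K K_def by simp
    moreover have "\<forall>g\<in>K. open (B g)" using AB by blast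
    moreover have "K \<subseteq> \<Union>(B ` K)" using AB by blast
    ultimately obtain K' where K': "K' \<subseteq> K" "finite K'" "K \<subseteq> \<Union>(B ` K')"
      by (meson compactE_image)
    define T where "T = Vx \<inter> (\<Inter>g\<in>K'. A g)"
    have "open T" unfolding T_def using V K' AB by (intro open_Int open_INT) auto
    moreover have "x \<in> T" unfolding T_def using V K' AB by auto
    moreover have "T \<subseteq> - S"
    proof
      fix y assume y: "y \<in> T"
      show "y \<in> - S"
      proof
        assume "y \<in> S"
        then obtain c g where c: "c \<in> C" "y = act c g" unfolding S_def by blast
        have "act y (- g) = c" using c aa a0 by simp
        then have "act y (- g) \<in> VF" using c CF V by blast
        moreover have "y \<in> Vx" using y T_def by blast
        ultimately have "- g \<in> transporter act VF Vx" unfolding transporter_def by blast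
        then have "- g \<in> K" unfolding K_def using closure_subset by blast
        then obtain g' where g': "g' \<in> K'" "- g \<in> B g'" using K' by blast
        then have "y \<in> A g'" using y T_def by blast
        then have "(y, - g) \<in> P" using AB g' K' by blast
        then have "act y (- g) \<notin> C" unfolding P_def by simp
        then show False using \<open>act y (- g) = c\<close> c by simp
      qed
    qed
    ultimately show "\<exists>T. open T \<and> x \<in> T \<and> T \<subseteq> - S" by blast
  qed
  then show ?thesis unfolding S_def[symmetric] by (simp add: closed_def)
qed

lemma fiber_compact:
  fixes act :: "'x::topological_space \<Rightarrow> 'g::topological_group_add \<Rightarrow> 'x"
  assumes A: "cont_right_action act" and cF: "closed F" and FP: "F_proper act F"
  shows "compact {x \<in> F. orbit_map act x = orbit_map act x0}"
proof -
  have ct: "continuous_on UNIV (\<lambda>(x, g). act x g)"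
    using A unfolding cont_right_action_def by auto
  obtain Vx VF where V: "open Vx" "x0 \<in> Vx" "open VF" "F \<subseteq> VF"
    and K: "compact (closure (transporter act VF Vx))"
    using FPD[OF FP, of x0] by blast
  define K where "K = closure (transporter act VF Vx)"
  have eq: "{x \<in> F. orbit_map act x = orbit_map act x0} = F \<inter> act x0 ` K"
  proof
    show "{x \<in> F. orbit_map act x = orbit_map act x0} \<subseteq> F \<inter> act x0 ` K"
    proof
      fix x assume x: "x \<in> {x \<in> F. orbit_map act x = orbit_map act x0}"
      then obtain g where g: "x = act x0 g" using orbit_eq[OF A, of x0 x] by auto
      then have "g \<in> transporter act VF Vx" unfolding transporter_def using x V by blast
      then have "g \<in> K" unfolding K_def using closure_subset by blast
      then show "x \<in> F \<inter> act x0 ` K" using g x by blast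
    qed
    show "F \<inter> act x0 ` K \<subseteq> {x \<in> F. orbit_map act x = orbit_map act x0}"
      using orbit_eq[OF A, of x0] by auto
  qed
  have "continuous_on UNIV (\<lambda>g. (\<lambda>(x, g). act x g) (x0, g))"
    by (rule continuous_on_compose2[OF ct]) (auto intro!: continuous_intros)
  then have "continuous_on UNIV (act x0)" by simp
  then have "continuous_on K (act x0)" by (rule continuous_on_subset) simp
  then have "compact (act x0 ` K)" using K K_def compact_continuous_image by blast
  then show ?thesis unfolding eq using cF by (rule closed_Int_compact[rotated])
qed



theorem lemma2p13:
  fixes act :: "'x::t2_space \<Rightarrow> 'g::{topological_group_add, t2_space} \<Rightarrow> 'x"
    and F :: "'x set"
  assumes "locally_compact_space (euclidean :: 'g topology)"
    and "cont_right_action act"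
    and "bourbaki_proper act"
    and "closed F"
    and "F_proper act F"
    and "paracompact_space (top_of_set F)"
  shows "paracompact_space (subtopology (orbit_space act) (orbit_map act ` F))"
proof -
  note A = assms(2) and cF = assms(4) and FP = assms(5) and P = assms(6)
  define X where "X = top_of_set F"
  define Y where "Y = subtopology (orbit_space act) (orbit_map act ` F)"
  have "Hausdorff_space (euclidean :: 'x topology)"
    unfolding Hausdorff_space_def disjnt_def
  proof (intro allI impI)
    fix x y :: 'x
    assume "x \<in> topspace euclidean \<and> y \<in> topspace euclidean \<and> x \<noteq> y"
    then have "x \<noteq> y" by simp
    then show "\<exists>U V. openin euclidean U \<and> openin euclidean V \<and> x \<in> U \<and> y \<in> V \<and> U \<inter> V = {}"
      using hausdorff[of x y] by simp
  qed
  then have H: "Hausdorff_space X" unfolding X_def by (rule Hausdorff_space_subtopology)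
  have c0: "continuous_map euclidean (orbit_space act) (orbit_map act)"
    unfolding continuous_map_def topspace_orbit_space orbit_space_open by (auto simp: vimage_def)
  have cf: "continuous_map X Y (orbit_map act)"
    unfolding X_def Y_def continuous_map_in_subtopology
    using continuous_map_from_subtopology[OF c0] by auto
  have im: "orbit_map act ` topspace X = topspace Y"
    unfolding X_def Y_def by (auto simp: topspace_orbit_space)
  have oe: "orbit_map act x = orbit_map act c \<longleftrightarrow> (\<exists>g. x = act c g)" for c x
    using orbit_eq[OF A, of c x] by auto
  have cm: "closed_map X Y (orbit_map act)"
    unfolding closed_map_def
  proof (intro allI impI)
    fix C assume C: "closedin X C"
    then have cC: "closed C" using cF unfolding X_def by (rule closedin_closed_trans)
    have CF: "C \<subseteq> F" using closedin_subset[OF C] unfolding X_def by simp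
    have eq: "orbit_map act -` (range (orbit_map act) - orbit_map act ` C)
            = - {y. \<exists>c\<in>C. \<exists>g. y = act c g}" (is "?L = ?R")
    proof -
      have "x \<in> ?L \<longleftrightarrow> x \<in> ?R" for x
      proof -
        have "x \<in> ?L \<longleftrightarrow> \<not> (\<exists>c\<in>C. orbit_map act x = orbit_map act c)" by auto
        also have "\<dots> \<longleftrightarrow> \<not> (\<exists>c\<in>C. \<exists>g. x = act c g)" using oe by simp
        also have "\<dots> \<longleftrightarrow> x \<in> ?R" by simp
        finally show ?thesis .
      qed
      then show ?thesis by blast
    qed
    have "closedin (orbit_space act) (orbit_map act ` C)"
      unfolding closedin_def topspace_orbit_space orbit_space_open eq
      using saturation_closed[OF A CF cC FP] by (auto simp: closed_def)
    moreover have "orbit_map act ` C = orbit_map act ` C \<inter> orbit_map act ` F" using CF by blast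
    ultimately show "closedin Y (orbit_map act ` C)"
      unfolding Y_def closedin_subtopology by blast
  qed
  have pm: "proper_map X Y (orbit_map act)"
    unfolding proper_map_def
  proof (intro conjI cm ballI)
    fix y assume "y \<in> topspace Y"
    then obtain x0 where x0: "x0 \<in> F" "y = orbit_map act x0" unfolding Y_def by auto
    have "compact {x \<in> F. orbit_map act x = orbit_map act x0}"
      by (rule fiber_compact[OF A cF FP])
    then show "compactin X {x \<in> topspace X. orbit_map act x = y}"
      unfolding X_def compactin_subtopology using x0 by auto
  qed
  show ?thesis
    using perfect_image_paracompact[OF P[folded X_def] H cf im pm] unfolding Y_def .
qed


end
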